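(* Let $\mathcal T$ consist of projective objects and let $f\in\mathcal A(X,Y)$ be an epimorphism in $\mathcal A$. The following are equivalent: (1) $\overline f$ is an epimorphism in $\underline{\mathcal A}$; (2) for every morphism $h:X\to T$ with $T\in\mathcal T$, there is a morphism $\tilde h:X\to h(\ker f)$ that coincides with $h$ on $\ker(f)$. If moreover $\mathcal T$ is covariantly finite, these are also equivalent to: (3) for every (equivalently, for some) $\mathcal T$-preenvelope $\mu^X:X\to T^X$, there is a morphism $\tilde\mu:X\to\mu^X(\ker f)$ that coincides with $\mu^X$ on $\ker(f)$.
   Context: $\mathcal A$ is abelian, $\mathcal T$ a full additive subcategory closed under finite direct sums and direct summands consisting of projective objects; $\underline{\mathcal A}=\mathcal A/\langle\mathcal T\rangle$ is the stable category and $\overline f$ the class of $f$. For a subobject $\kappa:K\hookrightarrow X$ and a morphism $h:X\to T$, $h(K)$ denotes the image of $h\kappa$, with canonical inclusion $j:h(K)\hookrightarrow T$; a morphism $\tilde h:X\to h(K)$ is said to coincide with $h$ on $K$ if $j\tilde h\kappa=h\kappa$. *)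

theory Defs
  imports Main
begin

text \<open>A category with hom-sets, presented concretely.  cmp g f denotes g after f.
  Preadditive structure: madd, mzero, mneg on hom-sets.\<close>

record ('o, 'm) precat =
  Ob    :: "'o set"
  Hom   :: "'o \<Rightarrow> 'o \<Rightarrow> 'm set"
  cmp   :: "'m \<Rightarrow> 'm \<Rightarrow> 'm"
  idm   :: "'o \<Rightarrow> 'm"
  madd  :: "'m \<Rightarrow> 'm \<Rightarrow> 'm"
  mzero :: "'o \<Rightarrow> 'o \<Rightarrow> 'm"
  mneg  :: "'m \<Rightarrow> 'm"

definition category :: "('o, 'm) precat \<Rightarrow> bool" where
  "category C \<longleftrightarrow>
     (\<forall>A\<in>Ob C. idm C A \<in> Hom C A A) \<and>
     (\<forall>A\<in>Ob C. \<forall>B\<in>Ob C. \<forall>D\<in>Ob C. \<forall>f\<in>Hom C A B. \<forall>g\<in>Hom C B D. cmp C g f \<in> Hom C A D) \<and>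
     (\<forall>A\<in>Ob C. \<forall>B\<in>Ob C. \<forall>D\<in>Ob C. \<forall>E\<in>Ob C. \<forall>f\<in>Hom C A B. \<forall>g\<in>Hom C B D. \<forall>h\<in>Hom C D E.
        cmp C h (cmp C g f) = cmp C (cmp C h g) f) \<and>
     (\<forall>A\<in>Ob C. \<forall>B\<in>Ob C. \<forall>f\<in>Hom C A B. cmp C f (idm C A) = f \<and> cmp C (idm C B) f = f)"

definition preadditive :: "('o, 'm) precat \<Rightarrow> bool" where
  "preadditive C \<longleftrightarrow> category C \<and>
     (\<forall>A\<in>Ob C. \<forall>B\<in>Ob C.
        mzero C A B \<in> Hom C A B \<and>
        (\<forall>f\<in>Hom C A B. \<forall>g\<in>Hom C A B. madd C f g \<in> Hom C A B \<and> madd C f g = madd C g f) \<and>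
        (\<forall>f\<in>Hom C A B. \<forall>g\<in>Hom C A B. \<forall>h\<in>Hom C A B. madd C (madd C f g) h = madd C f (madd C g h)) \<and>
        (\<forall>f\<in>Hom C A B. madd C f (mzero C A B) = f \<and> mneg C f \<in> Hom C A B \<and>
                         madd C f (mneg C f) = mzero C A B)) \<and>
     (\<forall>A\<in>Ob C. \<forall>B\<in>Ob C. \<forall>D\<in>Ob C. \<forall>f\<in>Hom C A B. \<forall>f'\<in>Hom C A B. \<forall>g\<in>Hom C B D. \<forall>g'\<in>Hom C B D.
        cmp C g (madd C f f') = madd C (cmp C g f) (cmp C g f') \<and>
        cmp C (madd C g g') f = madd C (cmp C g f) (cmp C g' f))"

definition zero_object :: "('o, 'm) precat \<Rightarrow> 'o \<Rightarrow> bool" where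
  "zero_object C Z \<longleftrightarrow> Z \<in> Ob C \<and>
     (\<forall>A\<in>Ob C. Hom C Z A = {mzero C Z A} \<and> Hom C A Z = {mzero C A Z})"

definition biproduct :: "('o, 'm) precat \<Rightarrow> 'o \<Rightarrow> 'o \<Rightarrow> 'o \<Rightarrow> 'm \<Rightarrow> 'm \<Rightarrow> 'm \<Rightarrow> 'm \<Rightarrow> bool" where
  "biproduct C A B S i1 i2 p1 p2 \<longleftrightarrow> A \<in> Ob C \<and> B \<in> Ob C \<and> S \<in> Ob C \<and>
     i1 \<in> Hom C A S \<and> i2 \<in> Hom C B S \<and> p1 \<in> Hom C S A \<and> p2 \<in> Hom C S B \<and>
     cmp C p1 i1 = idm C A \<and> cmp C p2 i2 = idm C B \<and>
     cmp C p1 i2 = mzero C B A \<and> cmp C p2 i1 = mzero C A B \<and>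
     madd C (cmp C i1 p1) (cmp C i2 p2) = idm C S"

definition mono :: "('o, 'm) precat \<Rightarrow> 'o \<Rightarrow> 'o \<Rightarrow> 'm \<Rightarrow> bool" where
  "mono C A B f \<longleftrightarrow> f \<in> Hom C A B \<and>
     (\<forall>W\<in>Ob C. \<forall>g1\<in>Hom C W A. \<forall>g2\<in>Hom C W A. cmp C f g1 = cmp C f g2 \<longrightarrow> g1 = g2)"

definition epi :: "('o, 'm) precat \<Rightarrow> 'o \<Rightarrow> 'o \<Rightarrow> 'm \<Rightarrow> bool" where
  "epi C A B f \<longleftrightarrow> f \<in> Hom C A B \<and>
     (\<forall>W\<in>Ob C. \<forall>g1\<in>Hom C B W. \<forall>g2\<in>Hom C B W. cmp C g1 f = cmp C g2 f \<longrightarrow> g1 = g2)"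

definition is_kernel :: "('o, 'm) precat \<Rightarrow> 'o \<Rightarrow> 'o \<Rightarrow> 'm \<Rightarrow> 'o \<Rightarrow> 'm \<Rightarrow> bool" where
  "is_kernel C A B f K k \<longleftrightarrow> K \<in> Ob C \<and> f \<in> Hom C A B \<and> k \<in> Hom C K A \<and>
     cmp C f k = mzero C K B \<and>
     (\<forall>W\<in>Ob C. \<forall>g\<in>Hom C W A. cmp C f g = mzero C W B \<longrightarrow> (\<exists>!u. u \<in> Hom C W K \<and> cmp C k u = g))"

definition is_cokernel :: "('o, 'm) precat \<Rightarrow> 'o \<Rightarrow> 'o \<Rightarrow> 'm \<Rightarrow> 'o \<Rightarrow> 'm \<Rightarrow> bool" where
  "is_cokernel C A B f Q c \<longleftrightarrow> Q \<in> Ob C \<and> f \<in> Hom C A B \<and> c \<in> Hom C B Q \<and>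
     cmp C c f = mzero C A Q \<and>
     (\<forall>W\<in>Ob C. \<forall>g\<in>Hom C B W. cmp C g f = mzero C A W \<longrightarrow> (\<exists>!u. u \<in> Hom C Q W \<and> cmp C u c = g))"

definition abelian :: "('o, 'm) precat \<Rightarrow> bool" where
  "abelian C \<longleftrightarrow> preadditive C \<and>
     (\<exists>Z. zero_object C Z) \<and>
     (\<forall>A\<in>Ob C. \<forall>B\<in>Ob C. \<exists>S i1 i2 p1 p2. biproduct C A B S i1 i2 p1 p2) \<and>
     (\<forall>A\<in>Ob C. \<forall>B\<in>Ob C. \<forall>f\<in>Hom C A B. (\<exists>K k. is_kernel C A B f K k) \<and> (\<exists>Q c. is_cokernel C A B f Q c)) \<and>
     (\<forall>A\<in>Ob C. \<forall>B\<in>Ob C. \<forall>f. mono C A B f \<longrightarrow> (\<exists>D\<in>Ob C. \<exists>g\<in>Hom C B D. is_kernel C B D g A f)) \<and>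
     (\<forall>A\<in>Ob C. \<forall>B\<in>Ob C. \<forall>f. epi C A B f \<longrightarrow> (\<exists>D\<in>Ob C. \<exists>g\<in>Hom C D A. is_cokernel C D A g B f))"

definition projective :: "('o, 'm) precat \<Rightarrow> 'o \<Rightarrow> bool" where
  "projective C P \<longleftrightarrow> P \<in> Ob C \<and>
     (\<forall>A\<in>Ob C. \<forall>B\<in>Ob C. \<forall>e. epi C A B e \<longrightarrow>
        (\<forall>g\<in>Hom C P B. \<exists>g'\<in>Hom C P A. cmp C e g' = g))"

definition additive_subcat_closed :: "('o, 'm) precat \<Rightarrow> 'o set \<Rightarrow> bool" where
  "additive_subcat_closed C \<T> \<longleftrightarrow> \<T> \<subseteq> Ob C \<and>
     (\<exists>Z\<in>\<T>. zero_object C Z) \<and>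
     (\<forall>A B S i1 i2 p1 p2. biproduct C A B S i1 i2 p1 p2 \<longrightarrow>
        ((A \<in> \<T> \<and> B \<in> \<T>) \<longrightarrow> S \<in> \<T>) \<and> (S \<in> \<T> \<longrightarrow> A \<in> \<T>))"

text \<open>g : A \<rightarrow> B lies in the ideal generated by \<T>, i.e. factors through an object of \<T>
  (since \<T> is closed under finite direct sums, this is the ideal generated by \<T>).\<close>
definition factors_through :: "('o, 'm) precat \<Rightarrow> 'o set \<Rightarrow> 'o \<Rightarrow> 'o \<Rightarrow> 'm \<Rightarrow> bool" where
  "factors_through C \<T> A B g \<longleftrightarrow>
     (\<exists>T\<in>\<T>. \<exists>a\<in>Hom C A T. \<exists>b\<in>Hom C T B. g = cmp C b a)"

text \<open>The class of f : A \<rightarrow> B is an epimorphism in the stable category A / \<langle>\<T>\<rangle>.\<close>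
definition stable_epi :: "('o, 'm) precat \<Rightarrow> 'o set \<Rightarrow> 'o \<Rightarrow> 'o \<Rightarrow> 'm \<Rightarrow> bool" where
  "stable_epi C \<T> A B f \<longleftrightarrow>
     (\<forall>Z\<in>Ob C. \<forall>g\<in>Hom C B Z. factors_through C \<T> A Z (cmp C g f) \<longrightarrow> factors_through C \<T> B Z g)"

definition preenvelope :: "('o, 'm) precat \<Rightarrow> 'o set \<Rightarrow> 'o \<Rightarrow> 'o \<Rightarrow> 'm \<Rightarrow> bool" where
  "preenvelope C \<T> X TX \<mu> \<longleftrightarrow> TX \<in> \<T> \<and> \<mu> \<in> Hom C X TX \<and>
     (\<forall>T\<in>\<T>. \<forall>h\<in>Hom C X T. \<exists>u\<in>Hom C TX T. cmp C u \<mu> = h)"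

definition covariantly_finite :: "('o, 'm) precat \<Rightarrow> 'o set \<Rightarrow> bool" where
  "covariantly_finite C \<T> \<longleftrightarrow> (\<forall>X\<in>Ob C. \<exists>TX \<mu>. preenvelope C \<T> X TX \<mu>)"

text \<open>Here ker f is given by any kernel \<kappa> : K \<rightarrow> X and h(ker f) by any image
  (epi-mono) factorization h\<kappa> = j e with j : I \<rightarrow> T; the condition is independent of
  these choices, and we require it for all of them.\<close>
definition coincides_on_kernel ::
  "('o, 'm) precat \<Rightarrow> 'o \<Rightarrow> 'o \<Rightarrow> 'm \<Rightarrow> 'o \<Rightarrow> 'm \<Rightarrow> bool" where
  "coincides_on_kernel C X Y f T h \<longleftrightarrow>
     (\<forall>K \<kappa>. is_kernel C X Y f K \<kappa> \<longrightarrow>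
       (\<forall>I e j. I \<in> Ob C \<and> epi C K I e \<and> mono C I T j \<and> cmp C h \<kappa> = cmp C j e \<longrightarrow>
          (\<exists>ht\<in>Hom C X I. cmp C j (cmp C ht \<kappa>) = cmp C h \<kappa>)))"

end

theory Submission
  imports Defs
begin

locale abcat =
  fixes C :: "('o, 'm) precat"
  assumes ab: "abelian C"
begin

abbreviation cc (infixr "\<cdot>" 75) where "g \<cdot> f \<equiv> cmp C g f"
abbreviation ad (infixl "+++" 65) where "x +++ y \<equiv> madd C x y"
abbreviation ng where "ng x \<equiv> mneg C x"
abbreviation Z where "Z A B \<equiv> mzero C A B"
abbreviation H where "H A B \<equiv> Hom C A B"

lemma pre: "preadditive C" using ab unfolding abelian_def by blast
lemma cat: "category C" using pre unfolding preadditive_def by blast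

lemma comp_hom: "A \<in> Ob C \<Longrightarrow> B \<in> Ob C \<Longrightarrow> D \<in> Ob C \<Longrightarrow> f \<in> H A B \<Longrightarrow> g \<in> H B D \<Longrightarrow> g \<cdot> f \<in> H A D"
  using cat unfolding category_def by blast
lemma assoc: "A \<in> Ob C \<Longrightarrow> B \<in> Ob C \<Longrightarrow> D \<in> Ob C \<Longrightarrow> E \<in> Ob C \<Longrightarrow> f \<in> H A B \<Longrightarrow> g \<in> H B D \<Longrightarrow> h \<in> H D E \<Longrightarrow> h \<cdot> (g \<cdot> f) = (h \<cdot> g) \<cdot> f"
  using cat unfolding category_def by blast
lemma id_hom: "A \<in> Ob C \<Longrightarrow> idm C A \<in> H A A"
  using cat unfolding category_def by blast
lemma id_r: "A \<in> Ob C \<Longrightarrow> B \<in> Ob C \<Longrightarrow> f \<in> H A B \<Longrightarrow> f \<cdot> idm C A = f"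
  using cat unfolding category_def by blast
lemma id_l: "A \<in> Ob C \<Longrightarrow> B \<in> Ob C \<Longrightarrow> f \<in> H A B \<Longrightarrow> idm C B \<cdot> f = f"
  using cat unfolding category_def by blast

lemma zero_hom: "A \<in> Ob C \<Longrightarrow> B \<in> Ob C \<Longrightarrow> Z A B \<in> H A B"
  using pre unfolding preadditive_def by blast
lemma add_hom: "A \<in> Ob C \<Longrightarrow> B \<in> Ob C \<Longrightarrow> f \<in> H A B \<Longrightarrow> g \<in> H A B \<Longrightarrow> f +++ g \<in> H A B"
  using pre unfolding preadditive_def by blast
lemma add_comm: "A \<in> Ob C \<Longrightarrow> B \<in> Ob C \<Longrightarrow> f \<in> H A B \<Longrightarrow> g \<in> H A B \<Longrightarrow> f +++ g = g +++ f"
  using pre unfolding preadditive_def by blast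
lemma add_assoc: "A \<in> Ob C \<Longrightarrow> B \<in> Ob C \<Longrightarrow> f \<in> H A B \<Longrightarrow> g \<in> H A B \<Longrightarrow> h \<in> H A B \<Longrightarrow> (f +++ g) +++ h = f +++ (g +++ h)"
  using pre unfolding preadditive_def by blast
lemma add_zero: "A \<in> Ob C \<Longrightarrow> B \<in> Ob C \<Longrightarrow> f \<in> H A B \<Longrightarrow> f +++ Z A B = f"
  using pre unfolding preadditive_def by blast
lemma neg_hom: "A \<in> Ob C \<Longrightarrow> B \<in> Ob C \<Longrightarrow> f \<in> H A B \<Longrightarrow> ng f \<in> H A B"
  using pre unfolding preadditive_def by blast
lemma add_neg: "A \<in> Ob C \<Longrightarrow> B \<in> Ob C \<Longrightarrow> f \<in> H A B \<Longrightarrow> f +++ ng f = Z A B"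
  using pre unfolding preadditive_def by blast
lemma distl: "A \<in> Ob C \<Longrightarrow> B \<in> Ob C \<Longrightarrow> D \<in> Ob C \<Longrightarrow> f \<in> H A B \<Longrightarrow> f' \<in> H A B \<Longrightarrow> g \<in> H B D \<Longrightarrow> g \<cdot> (f +++ f') = g \<cdot> f +++ g \<cdot> f'"
  using pre unfolding preadditive_def by blast
lemma distr: "A \<in> Ob C \<Longrightarrow> B \<in> Ob C \<Longrightarrow> D \<in> Ob C \<Longrightarrow> f \<in> H A B \<Longrightarrow> g \<in> H B D \<Longrightarrow> g' \<in> H B D \<Longrightarrow> (g +++ g') \<cdot> f = g \<cdot> f +++ g' \<cdot> f"
  using pre unfolding preadditive_def by blast

lemma zero_add: "A \<in> Ob C \<Longrightarrow> B \<in> Ob C \<Longrightarrow> f \<in> H A B \<Longrightarrow> Z A B +++ f = f"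
  by (metis add_comm add_zero zero_hom)

lemma neg_unique: assumes "A \<in> Ob C" "B \<in> Ob C" "a \<in> H A B" "b \<in> H A B" "a +++ b = Z A B"
  shows "b = ng a"
proof -
  have "b = b +++ (a +++ ng a)" using assms by (simp add: add_neg add_zero)
  also have "\<dots> = (b +++ a) +++ ng a" using assms by (simp add: add_assoc neg_hom)
  also have "\<dots> = ng a" using assms by (simp add: add_comm zero_add neg_hom)
  finally show ?thesis .
qed

lemma idem_zero: assumes "A \<in> Ob C" "B \<in> Ob C" "x \<in> H A B" "x = x +++ x" shows "x = Z A B"
proof -
  have "x = x +++ ng x" using assms neg_unique[of A B x x] by (metis add_neg add_zero neg_hom add_assoc)
  thus ?thesis using assms add_neg by simp
qed

lemma comp_zero_r: assumes "A \<in> Ob C" "B \<in> Ob C" "D \<in> Ob C" "g \<in> H B D" shows "g \<cdot> Z A B = Z A D"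
proof -
  have "g \<cdot> Z A B = g \<cdot> (Z A B +++ Z A B)" using assms by (simp add: add_zero zero_hom)
  also have "\<dots> = g \<cdot> Z A B +++ g \<cdot> Z A B" using assms by (simp add: distl zero_hom)
  finally show ?thesis using idem_zero assms comp_hom zero_hom by metis
qed

lemma comp_zero_l: assumes "A \<in> Ob C" "B \<in> Ob C" "D \<in> Ob C" "f \<in> H A B" shows "Z B D \<cdot> f = Z A D"
proof -
  have "Z B D \<cdot> f = (Z B D +++ Z B D) \<cdot> f" using assms by (simp add: add_zero zero_hom)
  also have "\<dots> = Z B D \<cdot> f +++ Z B D \<cdot> f" using assms by (simp add: distr zero_hom)
  finally show ?thesis using idem_zero assms comp_hom zero_hom by metis
qed

lemma comp_neg_r: assumes "A \<in> Ob C" "B \<in> Ob C" "D \<in> Ob C" "y \<in> H A B" "g \<in> H B D"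
  shows "g \<cdot> ng y = ng (g \<cdot> y)"
proof -
  have "g \<cdot> y +++ g \<cdot> ng y = g \<cdot> (y +++ ng y)" using assms by (simp add: distl neg_hom)
  also have "\<dots> = Z A D" using assms by (simp add: add_neg comp_zero_r)
  finally show ?thesis using neg_unique assms comp_hom neg_hom by metis
qed

lemma comp_neg_l: assumes "A \<in> Ob C" "B \<in> Ob C" "D \<in> Ob C" "f \<in> H A B" "y \<in> H B D"
  shows "ng y \<cdot> f = ng (y \<cdot> f)"
proof -
  have "y \<cdot> f +++ ng y \<cdot> f = (y +++ ng y) \<cdot> f" using assms by (simp add: distr neg_hom)
  also have "\<dots> = Z A D" using assms by (simp add: add_neg comp_zero_l)
  finally show ?thesis using neg_unique assms comp_hom neg_hom by metis
qed

lemma neg_zero: "A \<in> Ob C \<Longrightarrow> B \<in> Ob C \<Longrightarrow> ng (Z A B) = Z A B"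
  by (metis add_zero neg_unique zero_hom)

lemma sub_eq: assumes "A \<in> Ob C" "B \<in> Ob C" "x \<in> H A B" "z \<in> H A B" "x +++ ng z = w"
  shows "x = w +++ z"
proof -
  have nz: "ng z \<in> H A B" using assms neg_hom by blast
  have "w +++ z = x +++ (ng z +++ z)" using assms nz add_assoc[of A B x "ng z" z] by simp
  also have "ng z +++ z = Z A B" using assms nz add_comm[of A B "ng z" z] add_neg[of A B z] by simp
  finally show ?thesis using assms add_zero[of A B x] by simp
qed

lemma sub_zero: "A \<in> Ob C \<Longrightarrow> B \<in> Ob C \<Longrightarrow> x \<in> H A B \<Longrightarrow> z \<in> H A B \<Longrightarrow> x +++ ng z = Z A B \<Longrightarrow> x = z"
  by (metis sub_eq zero_add)

end

context abcat begin

lemma abp1: "\<forall>A\<in>Ob C. \<forall>B\<in>Ob C. \<forall>f\<in>Hom C A B. (\<exists>K k. is_kernel C A B f K k) \<and> (\<exists>Q c. is_cokernel C A B f Q c)"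
  using ab unfolding abelian_def by (elim conjE) assumption
lemma abp2: "\<forall>A\<in>Ob C. \<forall>B\<in>Ob C. \<forall>f. mono C A B f \<longrightarrow> (\<exists>D\<in>Ob C. \<exists>g\<in>Hom C B D. is_kernel C B D g A f)"
  using ab unfolding abelian_def by (elim conjE) assumption
lemma abp3: "\<forall>A\<in>Ob C. \<forall>B\<in>Ob C. \<forall>f. epi C A B f \<longrightarrow> (\<exists>D\<in>Ob C. \<exists>g\<in>Hom C D A. is_cokernel C D A g B f)"
  using ab unfolding abelian_def by (elim conjE) assumption

lemma ker_exists: "A \<in> Ob C \<Longrightarrow> B \<in> Ob C \<Longrightarrow> f \<in> H A B \<Longrightarrow> \<exists>K k. is_kernel C A B f K k"
  using abp1 by blast
lemma coker_exists: "A \<in> Ob C \<Longrightarrow> B \<in> Ob C \<Longrightarrow> f \<in> H A B \<Longrightarrow> \<exists>Q c. is_cokernel C A B f Q c"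
  using abp1 by blast
lemma mono_ker: "A \<in> Ob C \<Longrightarrow> B \<in> Ob C \<Longrightarrow> mono C A B f \<Longrightarrow> \<exists>D\<in>Ob C. \<exists>g\<in>H B D. is_kernel C B D g A f"
  using abp2 by blast
lemma epi_coker: "A \<in> Ob C \<Longrightarrow> B \<in> Ob C \<Longrightarrow> epi C A B f \<Longrightarrow> \<exists>D\<in>Ob C. \<exists>g\<in>H D A. is_cokernel C D A g B f"
  using abp3 by blast

lemma coker_parts: "is_cokernel C A B f Q c \<Longrightarrow> Q \<in> Ob C \<and> f \<in> H A B \<and> c \<in> H B Q \<and> c \<cdot> f = Z A Q"
  unfolding is_cokernel_def by (elim conjE) (intro conjI)
lemma ker_parts: "is_kernel C A B f K k \<Longrightarrow> K \<in> Ob C \<and> f \<in> H A B \<and> k \<in> H K A \<and> f \<cdot> k = Z K B"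
  unfolding is_kernel_def by (elim conjE) (intro conjI)
lemma coker_univ: assumes "is_cokernel C A B f Q c" "W \<in> Ob C" "g \<in> H B W" "g \<cdot> f = Z A W"
  shows "\<exists>!u. u \<in> H Q W \<and> u \<cdot> c = g"
proof -
  have "\<forall>W\<in>Ob C. \<forall>g\<in>Hom C B W. cmp C g f = mzero C A W \<longrightarrow> (\<exists>!u. u \<in> Hom C Q W \<and> cmp C u c = g)"
    using assms(1) unfolding is_cokernel_def by (elim conjE)
  then show ?thesis using assms(2-4) by blast
qed
lemma ker_univ: assumes "is_kernel C A B f K k" "W \<in> Ob C" "g \<in> H W A" "f \<cdot> g = Z W B"
  shows "\<exists>!u. u \<in> H W K \<and> k \<cdot> u = g"
proof -
  have "\<forall>W\<in>Ob C. \<forall>g\<in>Hom C W A. cmp C f g = mzero C W B \<longrightarrow> (\<exists>!u. u \<in> Hom C W K \<and> cmp C k u = g)"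
    using assms(1) unfolding is_kernel_def by (elim conjE)
  then show ?thesis using assms(2-4) by blast
qed

lemma ex1_uniq: "\<exists>!x. P x \<Longrightarrow> P a \<Longrightarrow> P b \<Longrightarrow> a = b" by blast

lemma mono_cancel: assumes "mono C A B f" "W \<in> Ob C" "g1 \<in> H W A" "g2 \<in> H W A" "f \<cdot> g1 = f \<cdot> g2"
  shows "g1 = g2"
proof -
  have "\<forall>W\<in>Ob C. \<forall>g1\<in>Hom C W A. \<forall>g2\<in>Hom C W A. cmp C f g1 = cmp C f g2 \<longrightarrow> g1 = g2"
    using assms(1) unfolding mono_def by (elim conjE)
  then show ?thesis using assms(2-5) by blast
qed
lemma epi_cancel: assumes "epi C A B f" "W \<in> Ob C" "g1 \<in> H B W" "g2 \<in> H B W" "g1 \<cdot> f = g2 \<cdot> f"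
  shows "g1 = g2"
proof -
  have "\<forall>W\<in>Ob C. \<forall>g1\<in>Hom C B W. \<forall>g2\<in>Hom C B W. cmp C g1 f = cmp C g2 f \<longrightarrow> g1 = g2"
    using assms(1) unfolding epi_def by (elim conjE)
  then show ?thesis using assms(2-5) by blast
qed
lemma mono_hom: "mono C A B f \<Longrightarrow> f \<in> H A B" unfolding mono_def by (elim conjE)
lemma epi_hom: "epi C A B f \<Longrightarrow> f \<in> H A B" unfolding epi_def by (elim conjE)

lemma cokernel_epi: assumes "A \<in> Ob C" "B \<in> Ob C" "is_cokernel C A B f Q c" shows "epi C B Q c"
  unfolding epi_def
proof (intro conjI ballI impI)
  have Q: "Q \<in> Ob C" "f \<in> H A B" "c \<in> H B Q" "c \<cdot> f = Z A Q" using coker_parts[OF assms(3)] by blast+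
  show "c \<in> H B Q" by fact
  fix W g1 g2 assume W: "W \<in> Ob C" "g1 \<in> H Q W" "g2 \<in> H Q W" "g1 \<cdot> c = g2 \<cdot> c"
  have gh: "g1 \<cdot> c \<in> H B W" using comp_hom[OF assms(2) Q(1) W(1) Q(3) W(2)] .
  have e1: "g1 \<cdot> (c \<cdot> f) = (g1 \<cdot> c) \<cdot> f" using assoc[OF assms(1,2) Q(1) W(1) Q(2,3) W(2)] .
  have e2: "g1 \<cdot> Z A Q = Z A W" using comp_zero_r[OF assms(1) Q(1) W(1,2)] .
  have "(g1 \<cdot> c) \<cdot> f = Z A W" using e1 e2 Q(4) by simp
  note u = coker_univ[OF assms(3) W(1) gh this]
  show "g1 = g2" by (rule ex1_uniq[OF u]) (use W in auto)
qed

lemma kernel_mono: assumes "A \<in> Ob C" "B \<in> Ob C" "is_kernel C A B f K k" shows "mono C K A k"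
  unfolding mono_def
proof (intro conjI ballI impI)
  have Q: "K \<in> Ob C" "f \<in> H A B" "k \<in> H K A" "f \<cdot> k = Z K B" using ker_parts[OF assms(3)] by blast+
  show "k \<in> H K A" by fact
  fix W g1 g2 assume W: "W \<in> Ob C" "g1 \<in> H W K" "g2 \<in> H W K" "k \<cdot> g1 = k \<cdot> g2"
  have gh: "k \<cdot> g1 \<in> H W A" using comp_hom[OF W(1) Q(1) assms(1) W(2) Q(3)] .
  have e1: "f \<cdot> (k \<cdot> g1) = (f \<cdot> k) \<cdot> g1" using assoc[OF W(1) Q(1) assms(1,2) W(2) Q(3,2)] .
  have e2: "Z K B \<cdot> g1 = Z W B" using comp_zero_l[OF W(1) Q(1) assms(2) W(2)] .
  have "f \<cdot> (k \<cdot> g1) = Z W B" using e1 e2 Q(4) by simp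
  note u = ker_univ[OF assms(3) W(1) gh this]
  show "g1 = g2" by (rule ex1_uniq[OF u]) (use W in auto)
qed

lemma mono_comp: assumes "A \<in> Ob C" "B \<in> Ob C" "D \<in> Ob C" "mono C A B f" "mono C B D g"
  shows "mono C A D (g \<cdot> f)"
  unfolding mono_def
proof (intro conjI ballI impI)
  have f: "f \<in> H A B" and g: "g \<in> H B D" using mono_hom assms by blast+
  then show "g \<cdot> f \<in> H A D" using comp_hom[OF assms(1-3) f g] by blast
  fix W g1 g2 assume W: "W \<in> Ob C" "g1 \<in> H W A" "g2 \<in> H W A" "(g \<cdot> f) \<cdot> g1 = (g \<cdot> f) \<cdot> g2"
  have a1: "g \<cdot> (f \<cdot> g1) = (g \<cdot> f) \<cdot> g1" using assoc[OF W(1) assms(1-3) W(2) f g] .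
  have a2: "g \<cdot> (f \<cdot> g2) = (g \<cdot> f) \<cdot> g2" using assoc[OF W(1) assms(1-3) W(3) f g] .
  have "g \<cdot> (f \<cdot> g1) = g \<cdot> (f \<cdot> g2)" using a1 a2 W(4) by simp
  moreover have "f \<cdot> g1 \<in> H W B" "f \<cdot> g2 \<in> H W B" using comp_hom[OF W(1) assms(1,2) _ f] W(2,3) by blast+
  ultimately have "f \<cdot> g1 = f \<cdot> g2" using mono_cancel[OF assms(5) W(1)] by blast
  then show "g1 = g2" using mono_cancel[OF assms(4) W(1-3)] by blast
qed

lemma epi_factor: assumes X: "X \<in> Ob C" "Y \<in> Ob C" and e: "epi C X Y f" and k: "is_kernel C X Y f K \<kappa>"
  and W: "W \<in> Ob C" "u \<in> H X W" "u \<cdot> \<kappa> = Z K W"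
  shows "\<exists>v\<in>H Y W. v \<cdot> f = u"
proof -
  obtain D g where D: "D \<in> Ob C" "g \<in> H D X" "is_cokernel C D X g Y f" using epi_coker X e by blast
  have K: "K \<in> Ob C" "f \<in> H X Y" "\<kappa> \<in> H K X" "f \<cdot> \<kappa> = Z K Y" using ker_parts[OF k] by blast+
  have "f \<cdot> g = Z D Y" using coker_parts[OF D(3)] by blast
  then obtain v0 where v0: "v0 \<in> H D K" "\<kappa> \<cdot> v0 = g" using ker_univ[OF k D(1,2)] by blast
  have e1: "u \<cdot> (\<kappa> \<cdot> v0) = (u \<cdot> \<kappa>) \<cdot> v0" using assoc[OF D(1) K(1) X(1) W(1) v0(1) K(3) W(2)] .
  have e2: "Z K W \<cdot> v0 = Z D W" using comp_zero_l[OF D(1) K(1) W(1) v0(1)] .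
  have "u \<cdot> g = Z D W" using e1 e2 v0(2) W(3) by simp
  then obtain v where "v \<in> H Y W" "v \<cdot> f = u" using coker_univ[OF D(3) W(1,2)] by blast
  then show ?thesis by blast
qed

lemma mono_factor: assumes X: "I \<in> Ob C" "T \<in> Ob C" and m: "mono C I T j" and k: "is_cokernel C I T j Q c"
  and W: "W \<in> Ob C" "w \<in> H W T" "c \<cdot> w = Z W Q"
  shows "\<exists>v\<in>H W I. j \<cdot> v = w"
proof -
  obtain D g where D: "D \<in> Ob C" "g \<in> H T D" "is_kernel C T D g I j" using mono_ker X m by blast
  have K: "Q \<in> Ob C" "j \<in> H I T" "c \<in> H T Q" "c \<cdot> j = Z I Q" using coker_parts[OF k] by blast+
  have "g \<cdot> j = Z I D" using ker_parts[OF D(3)] by blast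
  then obtain v0 where v0: "v0 \<in> H Q D" "v0 \<cdot> c = g" using coker_univ[OF k D(1,2)] by blast
  have e1: "v0 \<cdot> (c \<cdot> w) = (v0 \<cdot> c) \<cdot> w" using assoc[OF W(1) X(2) K(1) D(1) W(2) K(3) v0(1)] .
  have e2: "v0 \<cdot> Z W Q = Z W D" using comp_zero_r[OF W(1) K(1) D(1) v0(1)] .
  have "g \<cdot> w = Z W D" using e1 e2 v0(2) W(3) by simp
  then obtain v where "v \<in> H W I" "j \<cdot> v = w" using ker_univ[OF D(3) W(1,2)] by blast
  then show ?thesis by blast
qed


end

context abcat begin

lemma image_fact: assumes KT: "K \<in> Ob C" "T \<in> Ob C" "m \<in> H K T"
  shows "\<exists>I e j. I \<in> Ob C \<and> epi C K I e \<and> mono C I T j \<and> m = j \<cdot> e"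
proof -
  obtain Q c where c: "is_cokernel C K T m Q c" using coker_exists KT by blast
  have Q: "Q \<in> Ob C" "c \<in> H T Q" "c \<cdot> m = Z K Q" using coker_parts[OF c] by blast+
  obtain I j where j: "is_kernel C T Q c I j" using ker_exists KT Q by blast
  have I: "I \<in> Ob C" "j \<in> H I T" "c \<cdot> j = Z I Q" using ker_parts[OF j] by blast+
  have jm: "mono C I T j" using kernel_mono[OF KT(2) Q(1) j] .
  obtain e where e: "e \<in> H K I" "j \<cdot> e = m" using ker_univ[OF j KT(1,3) Q(3)] by blast
  obtain R q where q: "is_cokernel C K I e R q" using coker_exists KT I e by blast
  have R: "R \<in> Ob C" "q \<in> H I R" "q \<cdot> e = Z K R" using coker_parts[OF q] by blast+
  obtain N k' where k': "is_kernel C I R q N k'" using ker_exists I R by blast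
  have N: "N \<in> Ob C" "k' \<in> H N I" "q \<cdot> k' = Z N R" using ker_parts[OF k'] by blast+
  have k'm: "mono C N I k'" using kernel_mono[OF I(1) R(1) k'] .
  obtain e' where e': "e' \<in> H K N" "k' \<cdot> e' = e" using ker_univ[OF k' KT(1) e(1) R(3)] by blast
  have jkm: "mono C N T (j \<cdot> k')" using mono_comp[OF N(1) I(1) KT(2) k'm jm] .
  have jkh: "j \<cdot> k' \<in> H N T" using comp_hom[OF N(1) I(1) KT(2) N(2) I(2)] .
  obtain D d where D: "D \<in> Ob C" "d \<in> H T D" "is_kernel C T D d N (j \<cdot> k')" using mono_ker N KT jkm by blast
  have djk: "d \<cdot> (j \<cdot> k') = Z N D" using ker_parts[OF D(3)] by blast
  have "d \<cdot> m = Z K D"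
  proof -
    have a1: "j \<cdot> (k' \<cdot> e') = (j \<cdot> k') \<cdot> e'" using assoc[OF KT(1) N(1) I(1) KT(2) e'(1) N(2) I(2)] .
    have a2: "d \<cdot> ((j \<cdot> k') \<cdot> e') = (d \<cdot> (j \<cdot> k')) \<cdot> e'" using assoc[OF KT(1) N(1) KT(2) D(1) e'(1) jkh D(2)] .
    have a3: "Z N D \<cdot> e' = Z K D" using comp_zero_l[OF KT(1) N(1) D(1) e'(1)] .
    have "m = (j \<cdot> k') \<cdot> e'" using a1 e'(2) e(2) by simp
    then show ?thesis using a2 a3 djk by simp
  qed
  then obtain d' where d': "d' \<in> H Q D" "d' \<cdot> c = d" using coker_univ[OF c D(1,2)] by blast
  have "d \<cdot> j = Z I D"
  proof -
    have a1: "d' \<cdot> (c \<cdot> j) = (d' \<cdot> c) \<cdot> j" using assoc[OF I(1) KT(2) Q(1) D(1) I(2) Q(2) d'(1)] .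
    have a2: "d' \<cdot> Z I Q = Z I D" using comp_zero_r[OF I(1) Q(1) D(1) d'(1)] .
    show ?thesis using a1 a2 I(3) d'(2) by simp
  qed
  then obtain v where v: "v \<in> H I N" "(j \<cdot> k') \<cdot> v = j" using ker_univ[OF D(3) I(1,2)] by blast
  have kvh: "k' \<cdot> v \<in> H I I" using comp_hom[OF I(1) N(1) I(1) v(1) N(2)] .
  have "j \<cdot> (k' \<cdot> v) = j \<cdot> idm C I"
  proof -
    have a1: "j \<cdot> (k' \<cdot> v) = (j \<cdot> k') \<cdot> v" using assoc[OF I(1) N(1) I(1) KT(2) v(1) N(2) I(2)] .
    have a2: "j \<cdot> idm C I = j" using id_r[OF I(1) KT(2) I(2)] .
    show ?thesis using a1 a2 v(2) by simp
  qed
  then have kv: "k' \<cdot> v = idm C I" using mono_cancel[OF jm I(1) kvh id_hom[OF I(1)]] by blast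
  have q0: "q = Z I R"
  proof -
    have a1: "q \<cdot> (k' \<cdot> v) = (q \<cdot> k') \<cdot> v" using assoc[OF I(1) N(1) I(1) R(1) v(1) N(2) R(2)] .
    have a2: "q \<cdot> idm C I = q" using id_r[OF I(1) R(1) R(2)] .
    have a3: "Z N R \<cdot> v = Z I R" using comp_zero_l[OF I(1) N(1) R(1) v(1)] .
    show ?thesis using a1 a2 a3 kv N(3) by simp
  qed
  have "epi C K I e"
    unfolding epi_def
  proof (intro conjI ballI impI)
    show "e \<in> H K I" by fact
    fix W g1 g2 assume W: "W \<in> Ob C" "g1 \<in> H I W" "g2 \<in> H I W" "g1 \<cdot> e = g2 \<cdot> e"
    have n2: "ng g2 \<in> H I W" using neg_hom[OF I(1) W(1) W(3)] .
    have gh: "g1 +++ ng g2 \<in> H I W" using add_hom[OF I(1) W(1) W(2) n2] .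
    have a1: "(g1 +++ ng g2) \<cdot> e = g1 \<cdot> e +++ ng g2 \<cdot> e" using distr[OF KT(1) I(1) W(1) e(1) W(2) n2] .
    have a2: "ng g2 \<cdot> e = ng (g2 \<cdot> e)" using comp_neg_l[OF KT(1) I(1) W(1) e(1) W(3)] .
    have g2e: "g2 \<cdot> e \<in> H K W" using comp_hom[OF KT(1) I(1) W(1) e(1) W(3)] .
    have a3: "g2 \<cdot> e +++ ng (g2 \<cdot> e) = Z K W" using add_neg[OF KT(1) W(1) g2e] .
    have "(g1 +++ ng g2) \<cdot> e = Z K W" using a1 a2 a3 W(4) by simp
    then obtain t where t: "t \<in> H R W" "t \<cdot> q = g1 +++ ng g2" using coker_univ[OF q W(1) gh] by blast
    have "t \<cdot> Z I R = Z I W" using comp_zero_r[OF I(1) R(1) W(1) t(1)] .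
    then have "g1 +++ ng g2 = Z I W" using t(2) q0 by simp
    then show "g1 = g2" using sub_zero[OF I(1) W(1) W(2,3)] by blast
  qed
  then show ?thesis using I(1) jm e(2) by blast
qed


lemma L12: assumes X: "X \<in> Ob C" "Y \<in> Ob C" and fe: "epi C X Y f" and st: "stable_epi C \<T> X Y f"
  and proj: "\<forall>P\<in>\<T>. projective C P" and Tsub: "\<T> \<subseteq> Ob C"
  and T: "T \<in> \<T>" "h \<in> H X T"
  shows "coincides_on_kernel C X Y f T h"
  unfolding coincides_on_kernel_def
proof (intro allI impI)
  have TO: "T \<in> Ob C" using T Tsub by blast
  fix K \<kappa> assume k: "is_kernel C X Y f K \<kappa>"
  have K: "K \<in> Ob C" "f \<in> H X Y" "\<kappa> \<in> H K X" "f \<cdot> \<kappa> = Z K Y" using ker_parts[OF k] by blast+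
  fix I e j assume "I \<in> Ob C \<and> epi C K I e \<and> mono C I T j \<and> h \<cdot> \<kappa> = j \<cdot> e"
  then have I: "I \<in> Ob C" "epi C K I e" "mono C I T j" "h \<cdot> \<kappa> = j \<cdot> e" by blast+
  have eh: "e \<in> H K I" using epi_hom[OF I(2)] .
  have jh: "j \<in> H I T" using mono_hom[OF I(3)] .
  obtain Q c where c: "is_cokernel C I T j Q c" using coker_exists[OF I(1) TO jh] by blast
  have Q: "Q \<in> Ob C" "c \<in> H T Q" "c \<cdot> j = Z I Q" using coker_parts[OF c] by blast+
  have ch: "c \<cdot> h \<in> H X Q" using comp_hom[OF X(1) TO Q(1) T(2) Q(2)] .
  have "(c \<cdot> h) \<cdot> \<kappa> = Z K Q"
  proof -
    have a1: "c \<cdot> (h \<cdot> \<kappa>) = (c \<cdot> h) \<cdot> \<kappa>" using assoc[OF K(1) X(1) TO Q(1) K(3) T(2) Q(2)] .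
    have a2: "c \<cdot> (j \<cdot> e) = (c \<cdot> j) \<cdot> e" using assoc[OF K(1) I(1) TO Q(1) eh jh Q(2)] .
    have a3: "Z I Q \<cdot> e = Z K Q" using comp_zero_l[OF K(1) I(1) Q(1) eh] .
    show ?thesis using a1 a2 a3 I(4) Q(3) by simp
  qed
  then obtain g where g: "g \<in> H Y Q" "g \<cdot> f = c \<cdot> h" using epi_factor[OF X fe k Q(1) ch] by blast
  have "factors_through C \<T> X Q (g \<cdot> f)" unfolding factors_through_def using T Q(2) g(2) by blast
  moreover have "\<forall>Z\<in>Ob C. \<forall>g\<in>Hom C Y Z. factors_through C \<T> X Z (cmp C g f) \<longrightarrow> factors_through C \<T> Y Z g"
    using st unfolding stable_epi_def .
  ultimately have "factors_through C \<T> Y Q g" using Q(1) g(1) by blast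
  then obtain T' a b where ab: "T' \<in> \<T>" "a \<in> H Y T'" "b \<in> H T' Q" "g = b \<cdot> a"
    unfolding factors_through_def by blast
  have T'O: "T' \<in> Ob C" using ab(1) Tsub by blast
  have cepi: "epi C T Q c" using cokernel_epi[OF I(1) TO c] .
  have "projective C T'" using proj ab(1) by blast
  then have "\<forall>A\<in>Ob C. \<forall>B\<in>Ob C. \<forall>e. epi C A B e \<longrightarrow> (\<forall>g\<in>Hom C T' B. \<exists>g'\<in>Hom C T' A. cmp C e g' = g)"
    unfolding projective_def by (elim conjE)
  then obtain b' where b': "b' \<in> H T' T" "c \<cdot> b' = b" using TO Q(1) cepi ab(3) by blast
  have afh: "a \<cdot> f \<in> H X T'" using comp_hom[OF X(1) X(2) T'O K(2) ab(2)] .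
  define y where "y = b' \<cdot> (a \<cdot> f)"
  have yh: "y \<in> H X T" unfolding y_def using comp_hom[OF X(1) T'O TO afh b'(1)] .
  have cy: "c \<cdot> y = c \<cdot> h"
  proof -
    have a1: "c \<cdot> (b' \<cdot> (a \<cdot> f)) = (c \<cdot> b') \<cdot> (a \<cdot> f)" using assoc[OF X(1) T'O TO Q(1) afh b'(1) Q(2)] .
    have a2: "b \<cdot> (a \<cdot> f) = (b \<cdot> a) \<cdot> f" using assoc[OF X(1) X(2) T'O Q(1) K(2) ab(2) ab(3)] .
    show ?thesis unfolding y_def using a1 a2 b'(2) ab(4) g(2) by simp
  qed
  have nyh: "ng y \<in> H X T" using neg_hom[OF X(1) TO yh] .
  define w where "w = h +++ ng y"
  have wh: "w \<in> H X T" unfolding w_def using add_hom[OF X(1) TO T(2) nyh] .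
  have "c \<cdot> w = Z X Q"
  proof -
    have a1: "c \<cdot> (h +++ ng y) = c \<cdot> h +++ c \<cdot> ng y" using distl[OF X(1) TO Q(1) T(2) nyh Q(2)] .
    have a2: "c \<cdot> ng y = ng (c \<cdot> y)" using comp_neg_r[OF X(1) TO Q(1) yh Q(2)] .
    have a3: "c \<cdot> h +++ ng (c \<cdot> h) = Z X Q" using add_neg[OF X(1) Q(1) ch] .
    show ?thesis unfolding w_def using a1 a2 a3 cy by simp
  qed
  then obtain ht where ht: "ht \<in> H X I" "j \<cdot> ht = w" using mono_factor[OF I(1) TO I(3) c X(1) wh] by blast
  have yk: "y \<cdot> \<kappa> = Z K T"
  proof -
    have a1: "(b' \<cdot> (a \<cdot> f)) \<cdot> \<kappa> = b' \<cdot> ((a \<cdot> f) \<cdot> \<kappa>)" using assoc[OF K(1) X(1) T'O TO K(3) afh b'(1)] by simp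
    have a2: "(a \<cdot> f) \<cdot> \<kappa> = a \<cdot> (f \<cdot> \<kappa>)" using assoc[OF K(1) X(1) X(2) T'O K(3) K(2) ab(2)] by simp
    have a3: "a \<cdot> Z K Y = Z K T'" using comp_zero_r[OF K(1) X(2) T'O ab(2)] .
    have a4: "b' \<cdot> Z K T' = Z K T" using comp_zero_r[OF K(1) T'O TO b'(1)] .
    show ?thesis unfolding y_def using a1 a2 a3 a4 K(4) by simp
  qed
  have hk: "h \<cdot> \<kappa> \<in> H K T" using comp_hom[OF K(1) X(1) TO K(3) T(2)] .
  have "j \<cdot> (ht \<cdot> \<kappa>) = h \<cdot> \<kappa>"
  proof -
    have a1: "j \<cdot> (ht \<cdot> \<kappa>) = (j \<cdot> ht) \<cdot> \<kappa>" using assoc[OF K(1) X(1) I(1) TO K(3) ht(1) jh] .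
    have a2: "(h +++ ng y) \<cdot> \<kappa> = h \<cdot> \<kappa> +++ ng y \<cdot> \<kappa>" using distr[OF K(1) X(1) TO K(3) T(2) nyh] .
    have a3: "ng y \<cdot> \<kappa> = ng (y \<cdot> \<kappa>)" using comp_neg_l[OF K(1) X(1) TO K(3) yh] .
    have a4: "ng (Z K T) = Z K T" using neg_zero[OF K(1) TO] .
    have a5: "h \<cdot> \<kappa> +++ Z K T = h \<cdot> \<kappa>" using add_zero[OF K(1) TO hk] .
    show ?thesis using a1 ht(2) a2 a3 a4 a5 yk unfolding w_def by simp
  qed
  then show "\<exists>ht\<in>H X I. j \<cdot> (ht \<cdot> \<kappa>) = h \<cdot> \<kappa>" using ht(1) by blast
qed


lemma L21: assumes X: "X \<in> Ob C" "Y \<in> Ob C" and fe: "epi C X Y f"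
  and T: "T \<in> Ob C" "a \<in> H X T" and coin: "coincides_on_kernel C X Y f T a"
  and Zo: "Zo \<in> Ob C" "b \<in> H T Zo" "g \<in> H Y Zo" "g \<cdot> f = b \<cdot> a"
  shows "\<exists>u\<in>H Y T. g = b \<cdot> u"
proof -
  have fh: "f \<in> H X Y" using epi_hom[OF fe] .
  obtain K \<kappa> where k: "is_kernel C X Y f K \<kappa>" using ker_exists[OF X fh] by blast
  have K: "K \<in> Ob C" "\<kappa> \<in> H K X" "f \<cdot> \<kappa> = Z K Y" using ker_parts[OF k] by blast+
  have akh: "a \<cdot> \<kappa> \<in> H K T" using comp_hom[OF K(1) X(1) T(1) K(2) T(2)] .
  obtain I e j where I: "I \<in> Ob C" "epi C K I e" "mono C I T j" "a \<cdot> \<kappa> = j \<cdot> e"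
    using image_fact[OF K(1) T(1) akh] by blast
  have eh: "e \<in> H K I" using epi_hom[OF I(2)] .
  have jh: "j \<in> H I T" using mono_hom[OF I(3)] .
  have "\<forall>K \<kappa>. is_kernel C X Y f K \<kappa> \<longrightarrow>
       (\<forall>I e j. I \<in> Ob C \<and> epi C K I e \<and> mono C I T j \<and> cmp C a \<kappa> = cmp C j e \<longrightarrow>
          (\<exists>ht\<in>Hom C X I. cmp C j (cmp C ht \<kappa>) = cmp C a \<kappa>))"
    using coin unfolding coincides_on_kernel_def .
  then obtain ht where ht: "ht \<in> H X I" "j \<cdot> (ht \<cdot> \<kappa>) = a \<cdot> \<kappa>" using k I by blast
  have jht: "j \<cdot> ht \<in> H X T" using comp_hom[OF X(1) I(1) T(1) ht(1) jh] .
  have njht: "ng (j \<cdot> ht) \<in> H X T" using neg_hom[OF X(1) T(1) jht] .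
  define w where "w = a +++ ng (j \<cdot> ht)"
  have wh: "w \<in> H X T" unfolding w_def using add_hom[OF X(1) T(1) T(2) njht] .
  have "w \<cdot> \<kappa> = Z K T"
  proof -
    have a1: "(a +++ ng (j \<cdot> ht)) \<cdot> \<kappa> = a \<cdot> \<kappa> +++ ng (j \<cdot> ht) \<cdot> \<kappa>" using distr[OF K(1) X(1) T(1) K(2) T(2) njht] .
    have a2: "ng (j \<cdot> ht) \<cdot> \<kappa> = ng ((j \<cdot> ht) \<cdot> \<kappa>)" using comp_neg_l[OF K(1) X(1) T(1) K(2) jht] .
    have a3: "j \<cdot> (ht \<cdot> \<kappa>) = (j \<cdot> ht) \<cdot> \<kappa>" using assoc[OF K(1) X(1) I(1) T(1) K(2) ht(1) jh] .
    have a4: "a \<cdot> \<kappa> +++ ng (a \<cdot> \<kappa>) = Z K T" using add_neg[OF K(1) T(1) akh] .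
    show ?thesis unfolding w_def using a1 a2 a3 a4 ht(2) by simp
  qed
  then obtain u where u: "u \<in> H Y T" "u \<cdot> f = w" using epi_factor[OF X fe k T(1) wh] by blast
  have aeq: "a = u \<cdot> f +++ j \<cdot> ht" using sub_eq[OF X(1) T(1) T(2) jht] u(2) unfolding w_def by simp
  have bjh: "b \<cdot> j \<in> H I Zo" using comp_hom[OF I(1) T(1) Zo(1) jh Zo(2)] .
  have bj: "b \<cdot> j = Z I Zo"
  proof -
    have a1: "(b \<cdot> j) \<cdot> e = b \<cdot> (j \<cdot> e)" using assoc[OF K(1) I(1) T(1) Zo(1) eh jh Zo(2)] by simp
    have a2: "b \<cdot> (a \<cdot> \<kappa>) = (b \<cdot> a) \<cdot> \<kappa>" using assoc[OF K(1) X(1) T(1) Zo(1) K(2) T(2) Zo(2)] .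
    have a3: "g \<cdot> (f \<cdot> \<kappa>) = (g \<cdot> f) \<cdot> \<kappa>" using assoc[OF K(1) X(1) X(2) Zo(1) K(2) fh Zo(3)] .
    have a4: "g \<cdot> Z K Y = Z K Zo" using comp_zero_r[OF K(1) X(2) Zo(1) Zo(3)] .
    have a5: "Z I Zo \<cdot> e = Z K Zo" using comp_zero_l[OF K(1) I(1) Zo(1) eh] .
    have "(b \<cdot> j) \<cdot> e = Z I Zo \<cdot> e" using a1 a2 a3 a4 a5 I(4) K(3) Zo(4) by simp
    then show ?thesis using epi_cancel[OF I(2) Zo(1) bjh zero_hom[OF I(1) Zo(1)]] by blast
  qed
  have ufh: "u \<cdot> f \<in> H X T" using comp_hom[OF X(1) X(2) T(1) fh u(1)] .
  have buh: "b \<cdot> u \<in> H Y Zo" using comp_hom[OF X(2) T(1) Zo(1) u(1) Zo(2)] .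
  have bufh: "(b \<cdot> u) \<cdot> f \<in> H X Zo" using comp_hom[OF X(1) X(2) Zo(1) fh buh] .
  have "g \<cdot> f = (b \<cdot> u) \<cdot> f"
  proof -
    have a1: "b \<cdot> (u \<cdot> f +++ j \<cdot> ht) = b \<cdot> (u \<cdot> f) +++ b \<cdot> (j \<cdot> ht)" using distl[OF X(1) T(1) Zo(1) ufh jht Zo(2)] .
    have a2: "b \<cdot> (u \<cdot> f) = (b \<cdot> u) \<cdot> f" using assoc[OF X(1) X(2) T(1) Zo(1) fh u(1) Zo(2)] .
    have a3: "b \<cdot> (j \<cdot> ht) = (b \<cdot> j) \<cdot> ht" using assoc[OF X(1) I(1) T(1) Zo(1) ht(1) jh Zo(2)] .
    have a4: "Z I Zo \<cdot> ht = Z X Zo" using comp_zero_l[OF X(1) I(1) Zo(1) ht(1)] .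
    have a5: "(b \<cdot> u) \<cdot> f +++ Z X Zo = (b \<cdot> u) \<cdot> f" using add_zero[OF X(1) Zo(1) bufh] .
    have "b \<cdot> a = (b \<cdot> u) \<cdot> f" using aeq a1 a2 a3 a4 a5 bj by simp
    then show ?thesis using Zo(4) by simp
  qed
  then have "g = b \<cdot> u" using epi_cancel[OF fe Zo(1) Zo(3) buh] by blast
  then show ?thesis using u(1) by blast
qed

lemma L21ft: assumes X: "X \<in> Ob C" "Y \<in> Ob C" and fe: "epi C X Y f" and Tsub: "\<T> \<subseteq> Ob C"
  and all: "\<And>T' a' b' Zo. T' \<in> \<T> \<Longrightarrow> Zo \<in> Ob C \<Longrightarrow> a' \<in> H X T' \<Longrightarrow> b' \<in> H T' Zo \<Longrightarrow>
      \<exists>T\<in>\<T>. \<exists>a\<in>H X T. \<exists>b\<in>H T Zo. coincides_on_kernel C X Y f T a \<and> b' \<cdot> a' = b \<cdot> a"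
  shows "stable_epi C \<T> X Y f"
  unfolding stable_epi_def
proof (intro ballI impI)
  fix Zo g assume g: "Zo \<in> Ob C" "g \<in> H Y Zo" and "factors_through C \<T> X Zo (g \<cdot> f)"
  then obtain T' a' b' where ab: "T' \<in> \<T>" "a' \<in> H X T'" "b' \<in> H T' Zo" "g \<cdot> f = b' \<cdot> a'"
    unfolding factors_through_def by blast
  obtain T a b where T: "T \<in> \<T>" "a \<in> H X T" "b \<in> H T Zo" "coincides_on_kernel C X Y f T a" "b' \<cdot> a' = b \<cdot> a"
    using all[OF ab(1) g(1) ab(2,3)] by blast
  have TO: "T \<in> Ob C" using T(1) Tsub by blast
  have "g \<cdot> f = b \<cdot> a" using ab(4) T(5) by simp
  then obtain u where "u \<in> H Y T" "g = b \<cdot> u" using L21[OF X fe TO T(2) T(4) g(1) T(3) g(2)] by blast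
  then show "factors_through C \<T> Y Zo g" unfolding factors_through_def using T(1,3) by blast
qed


lemma pre_ft: assumes X: "X \<in> Ob C" and Tsub: "\<T> \<subseteq> Ob C" and pe: "preenvelope C \<T> X TX \<mu>"
  and coin: "coincides_on_kernel C X Y f TX \<mu>"
  and ab: "T' \<in> \<T>" "Zo \<in> Ob C" "a' \<in> H X T'" "b' \<in> H T' Zo"
  shows "\<exists>T\<in>\<T>. \<exists>a\<in>H X T. \<exists>b\<in>H T Zo. coincides_on_kernel C X Y f T a \<and> b' \<cdot> a' = b \<cdot> a"
proof -
  have P: "TX \<in> \<T>" "\<mu> \<in> H X TX" "\<forall>T\<in>\<T>. \<forall>h\<in>Hom C X T. \<exists>u\<in>Hom C TX T. cmp C u \<mu> = h"
    using pe unfolding preenvelope_def by blast+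
  obtain u where u: "u \<in> H TX T'" "u \<cdot> \<mu> = a'" using P(3) ab(1,3) by blast
  have TO: "TX \<in> Ob C" "T' \<in> Ob C" using P(1) ab(1) Tsub by blast+
  have a1: "b' \<cdot> (u \<cdot> \<mu>) = (b' \<cdot> u) \<cdot> \<mu>" using assoc[OF X TO(1) TO(2) ab(2) P(2) u(1) ab(4)] .
  have bu: "b' \<cdot> u \<in> H TX Zo" using comp_hom[OF TO(1) TO(2) ab(2) u(1) ab(4)] .
  show ?thesis using P(1,2) bu coin a1 u(2) by blast
qed

end

theorem proposition4p2:
  fixes C :: "('o, 'm) precat" and \<T> :: "'o set"
  assumes "abelian C"
    and "additive_subcat_closed C \<T>"
    and "\<forall>P\<in>\<T>. projective C P"
    and "X \<in> Ob C" and "Y \<in> Ob C"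
    and "epi C X Y f"
  shows "(stable_epi C \<T> X Y f \<longleftrightarrow>
            (\<forall>T\<in>\<T>. \<forall>h\<in>Hom C X T. coincides_on_kernel C X Y f T h))
       \<and> (covariantly_finite C \<T> \<longrightarrow>
            (stable_epi C \<T> X Y f \<longleftrightarrow>
               (\<forall>TX \<mu>. preenvelope C \<T> X TX \<mu> \<longrightarrow> coincides_on_kernel C X Y f TX \<mu>))
          \<and> (stable_epi C \<T> X Y f \<longleftrightarrow>
               (\<exists>TX \<mu>. preenvelope C \<T> X TX \<mu> \<and> coincides_on_kernel C X Y f TX \<mu>)))"
proof -
  interpret abcat C by unfold_locales (rule assms(1))
  have Tsub: "\<T> \<subseteq> Ob C" using assms(2) unfolding additive_subcat_closed_def by (elim conjE)
  note X = assms(4,5) and fe = assms(6) and proj = assms(3)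
  have A: "stable_epi C \<T> X Y f \<longleftrightarrow> (\<forall>T\<in>\<T>. \<forall>h\<in>Hom C X T. coincides_on_kernel C X Y f T h)"
  proof
    assume st: "stable_epi C \<T> X Y f"
    show "\<forall>T\<in>\<T>. \<forall>h\<in>Hom C X T. coincides_on_kernel C X Y f T h"
      using L12[OF X fe st proj Tsub] by blast
  next
    assume all: "\<forall>T\<in>\<T>. \<forall>h\<in>Hom C X T. coincides_on_kernel C X Y f T h"
    show "stable_epi C \<T> X Y f"
      by (rule L21ft[OF X fe Tsub]) (use all in blast)
  qed
  have B: "covariantly_finite C \<T> \<Longrightarrow>
            (stable_epi C \<T> X Y f \<longleftrightarrow>
               (\<forall>TX \<mu>. preenvelope C \<T> X TX \<mu> \<longrightarrow> coincides_on_kernel C X Y f TX \<mu>))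
          \<and> (stable_epi C \<T> X Y f \<longleftrightarrow>
               (\<exists>TX \<mu>. preenvelope C \<T> X TX \<mu> \<and> coincides_on_kernel C X Y f TX \<mu>))"
  proof -
    assume cf: "covariantly_finite C \<T>"
    obtain TX0 \<mu>0 where pe0: "preenvelope C \<T> X TX0 \<mu>0" using cf X(1) unfolding covariantly_finite_def by blast
    have peT: "TX \<in> \<T> \<and> \<mu> \<in> H X TX" if "preenvelope C \<T> X TX \<mu>" for TX \<mu>
      using that unfolding preenvelope_def by blast
    have s1: "stable_epi C \<T> X Y f \<Longrightarrow> preenvelope C \<T> X TX \<mu> \<Longrightarrow> coincides_on_kernel C X Y f TX \<mu>" for TX \<mu>
      using L12[OF X fe _ proj Tsub] peT by blast
    have s2: "stable_epi C \<T> X Y f" if "preenvelope C \<T> X TX \<mu>" "coincides_on_kernel C X Y f TX \<mu>" for TX \<mu>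
      by (rule L21ft[OF X fe Tsub]) (rule pre_ft[OF X(1) Tsub that])
    show ?thesis using s1 s2 pe0 by blast
  qed
  show ?thesis using A B by blast
qed

end
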